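(* Let $\rho\in(0,1)$ and let $f:\mathbb{R}^n\to B^k$ be optimally stable with parameter $\rho$. Then there exists $\lambda\in\mathbb{R}^k$ such that \[\big\|U_\rho f(x)-\lambda/2\big\|\,f(x)=U_\rho f(x)-\lambda/2\quad\text{for almost every }x\in\mathbb{R}^n.\]
   Context: $\gamma$ is the standard Gaussian measure on $\mathbb{R}^n$, $U_\rho f(x)=\mathbb{E}[f(\rho x+\sqrt{1-\rho^2}\mathbf{z})]$ with $\mathbf{z}\sim\gamma$. A measurable $f:\mathbb{R}^n\to B^k$ is optimally stable with parameter $\rho$ if $\mathbb{E}_\gamma f=0$ and $\mathbb{E}_{\mathbf{x}\sim_\rho\mathbf{y}}\langle f(\mathbf{x}),f(\mathbf{y})\rangle$ is maximal among all measurable $g:\mathbb{R}^n\to B^k$ with $\mathbb{E}_\gamma g=0$, where $\mathbf{x}\sim_\rho\mathbf{y}$ are $\rho$-correlated standard Gaussian vectors. *)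

theory Defs
  imports "HOL-Probability.Probability"
begin

definition gauss_density :: "real^'n \<Rightarrow> real" where
  "gauss_density x = (2 * pi) powr (- real CARD('n) / 2) * exp (- (norm x)\<^sup>2 / 2)"

definition std_gaussian :: "(real^'n) measure" where
  "std_gaussian = density lborel (\<lambda>x. ennreal (gauss_density x))"

definition OU :: "real \<Rightarrow> (real^'n \<Rightarrow> real^'k) \<Rightarrow> real^'n \<Rightarrow> real^'k" where
  "OU \<rho> f x = (\<integral>z. f (\<rho> *\<^sub>R x + sqrt (1 - \<rho>\<^sup>2) *\<^sub>R z) \<partial>std_gaussian)"

text \<open>Noise stability E_{x ~rho y} <f(x), f(y)>, where (x,y) are rho-correlated standard
  Gaussians realised as y = rho x + sqrt(1-rho^2) z with x, z independent standard Gaussians.\<close>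
definition noise_stab :: "real \<Rightarrow> (real^'n \<Rightarrow> real^'k) \<Rightarrow> real" where
  "noise_stab \<rho> f = (\<integral>p. inner (f (fst p)) (f (\<rho> *\<^sub>R fst p + sqrt (1 - \<rho>\<^sup>2) *\<^sub>R snd p))
      \<partial>(std_gaussian \<Otimes>\<^sub>M std_gaussian))"

definition admissible :: "(real^'n \<Rightarrow> real^'k) \<Rightarrow> bool" where
  "admissible g \<longleftrightarrow> g \<in> borel_measurable borel \<and> (\<forall>x. g x \<in> cball 0 1)
      \<and> (\<integral>x. g x \<partial>std_gaussian) = 0"

definition optimally_stable :: "real \<Rightarrow> (real^'n \<Rightarrow> real^'k) \<Rightarrow> bool" where
  "optimally_stable \<rho> f \<longleftrightarrow> admissible f \<and>
      (\<forall>g :: real^'n \<Rightarrow> real^'k. admissible g \<longrightarrow> noise_stab \<rho> g \<le> noise_stab \<rho> f)"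

end

theory Submission
  imports Defs
begin

lemma gauss_density_prod:
  "gauss_density (x::real^'n) = (\<Prod>b\<in>Basis. std_normal_density (x \<bullet> b))"
proof -
  have "(\<Prod>b\<in>(Basis::(real^'n) set). std_normal_density (x \<bullet> b))
     = (\<Prod>b\<in>(Basis::(real^'n) set). (1 / sqrt (2*pi)) * exp (- (x\<bullet>b)\<^sup>2/2))"
    by (simp add: std_normal_density_def)
  also have "\<dots> = (1 / sqrt (2*pi))^DIM(real^'n) * (\<Prod>b\<in>(Basis::(real^'n) set). exp (- (x\<bullet>b)\<^sup>2/2))"
    by (simp only: prod.distrib prod_constant)
  also have "(\<Prod>b\<in>(Basis::(real^'n) set). exp (- (x\<bullet>b)\<^sup>2/2)) = exp (\<Sum>b\<in>(Basis::(real^'n) set). - (x\<bullet>b)\<^sup>2/2)"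
    by (simp add: exp_sum)
  also have "(\<Sum>b\<in>(Basis::(real^'n) set). - (x\<bullet>b)\<^sup>2/2) = - (norm x)\<^sup>2/2"
  proof -
    have "(norm x)\<^sup>2 = (\<Sum>b\<in>(Basis::(real^'n) set). (x\<bullet>b)\<^sup>2)"
      by (subst power2_norm_eq_inner, subst euclidean_inner) (simp add: power2_eq_square)
    moreover have "(\<Sum>b\<in>(Basis::(real^'n) set). - (x\<bullet>b)\<^sup>2/2) = - (\<Sum>b\<in>(Basis::(real^'n) set). (x\<bullet>b)\<^sup>2)/2"
      by (simp add: sum_divide_distrib sum_negf)
    ultimately show ?thesis by simp
  qed
  also have "(1 / sqrt (2*pi))^DIM(real^'n) = (2*pi) powr (- real CARD('n)/2)"
  proof -
    have a: "1 / sqrt (2*pi) = (2*pi) powr (-1/2)"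
      using powr_minus_divide[of "2*pi" "1/2"] powr_half_sqrt[of "2*pi"] by simp
    have "(1 / sqrt (2*pi))^DIM(real^'n) = ((2*pi) powr (-1/2)) ^ CARD('n)"
      by (simp only: a) simp
    also have "\<dots> = (2*pi) powr (real CARD('n) * (-1/2))"
      by (rule powr_power) simp
    finally show ?thesis by (simp add: mult.commute)
  qed
  finally show ?thesis by (simp add: gauss_density_def)
qed

lemma gauss_density_measurable[measurable]: "gauss_density \<in> borel_measurable borel"
  unfolding gauss_density_def by measurable

lemma gauss_density_pos: "gauss_density x > 0"
  unfolding gauss_density_def by simp

lemma sets_std_gaussian[measurable_cong, simp]: "sets std_gaussian = sets borel"
  unfolding std_gaussian_def by simp

lemma space_std_gaussian[simp]: "space std_gaussian = UNIV"
  unfolding std_gaussian_def by simp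

lemma prob_space_std_gaussian: "prob_space (std_gaussian :: (real^'n) measure)"
proof
  have 1: "(\<integral>\<^sup>+x. ennreal (std_normal_density x) \<partial>lborel) = 1"
    by (subst nn_integral_eq_integral) auto
  have "emeasure (std_gaussian :: (real^'n) measure) (space std_gaussian)
      = (\<integral>\<^sup>+x. ennreal (gauss_density x) \<partial>(lborel :: (real^'n) measure))"
    unfolding std_gaussian_def by (simp add: emeasure_density)
  also have "\<dots> = (\<integral>\<^sup>+x. (\<Prod>b\<in>(Basis::(real^'n) set). ennreal (std_normal_density (x \<bullet> b))) \<partial>lborel)"
    by (simp add: gauss_density_prod prod_ennreal)
  also have "\<dots> = (\<Prod>b\<in>(Basis::(real^'n) set). (\<integral>\<^sup>+x. ennreal (std_normal_density x) \<partial>lborel))"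
    by (rule nn_integral_lborel_prod) auto
  also have "\<dots> = 1" by (simp add: 1)
  finally show "emeasure (std_gaussian :: (real^'n) measure) (space std_gaussian) = 1" .
qed

lemma distr_uminus_lborel: "distr lborel borel uminus = (lborel :: 'a::euclidean_space measure)"
  using lborel_affine[of "-1::real" "0::'a"] by (simp add: density_1)

lemma nn_integral_translate_lborel:
  fixes g :: "'a::euclidean_space \<Rightarrow> ennreal"
  assumes [measurable]: "g \<in> borel_measurable borel"
  shows "(\<integral>\<^sup>+x. g (x + t) \<partial>lborel) = (\<integral>\<^sup>+x. g x \<partial>lborel)"
proof -
  have "(\<integral>\<^sup>+x. g x \<partial>lborel) = (\<integral>\<^sup>+x. g x \<partial>(distr lborel borel ((+) t)))"
    by (simp add: lborel_distr_plus)
  also have "\<dots> = (\<integral>\<^sup>+x. g (t + x) \<partial>lborel)"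
    by (rule nn_integral_distr) auto
  finally show ?thesis by (simp add: add.commute)
qed

lemma nn_integral_uminus_lborel:
  fixes g :: "'a::euclidean_space \<Rightarrow> ennreal"
  assumes [measurable]: "g \<in> borel_measurable borel"
  shows "(\<integral>\<^sup>+x. g (- x) \<partial>lborel) = (\<integral>\<^sup>+x. g x \<partial>lborel)"
proof -
  have "(\<integral>\<^sup>+x. g x \<partial>lborel) = (\<integral>\<^sup>+x. g x \<partial>(distr lborel borel uminus))"
    by (simp add: distr_uminus_lborel)
  also have "\<dots> = (\<integral>\<^sup>+x. g (- x) \<partial>lborel)"
    by (rule nn_integral_distr) auto
  finally show ?thesis ..
qed

lemma shearA:
  fixes h :: "'a::euclidean_space \<times> 'a \<Rightarrow> ennreal"
  assumes [measurable]: "h \<in> borel_measurable (lborel \<Otimes>\<^sub>M lborel)"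
  shows "(\<integral>\<^sup>+w. h (fst w + c *\<^sub>R snd w, snd w) \<partial>(lborel \<Otimes>\<^sub>M lborel)) = integral\<^sup>N (lborel \<Otimes>\<^sub>M lborel) h"
proof -
  have "(\<integral>\<^sup>+w. h (fst w + c *\<^sub>R snd w, snd w) \<partial>(lborel \<Otimes>\<^sub>M lborel))
     = (\<integral>\<^sup>+z. \<integral>\<^sup>+x. h (x + c *\<^sub>R z, z) \<partial>lborel \<partial>lborel)"
    by (subst lborel_pair.nn_integral_snd[symmetric]) (auto simp: split_beta')
  also have "\<dots> = (\<integral>\<^sup>+z. \<integral>\<^sup>+x. h (x, z) \<partial>lborel \<partial>lborel)"
    by (intro nn_integral_cong nn_integral_translate_lborel[where g="\<lambda>x. h (x, _)"]) measurable
  also have "\<dots> = integral\<^sup>N (lborel \<Otimes>\<^sub>M lborel) h"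
    by (subst lborel_pair.nn_integral_snd[symmetric]) auto
  finally show ?thesis .
qed

lemma shearB:
  fixes h :: "'a::euclidean_space \<times> 'a \<Rightarrow> ennreal"
  assumes [measurable]: "h \<in> borel_measurable (lborel \<Otimes>\<^sub>M lborel)"
  shows "(\<integral>\<^sup>+w. h (fst w, snd w + c *\<^sub>R fst w) \<partial>(lborel \<Otimes>\<^sub>M lborel)) = integral\<^sup>N (lborel \<Otimes>\<^sub>M lborel) h"
proof -
  have "(\<integral>\<^sup>+w. h (fst w, snd w + c *\<^sub>R fst w) \<partial>(lborel \<Otimes>\<^sub>M lborel))
     = (\<integral>\<^sup>+x. \<integral>\<^sup>+z. h (x, z + c *\<^sub>R x) \<partial>lborel \<partial>lborel)"
    by (subst lborel.nn_integral_fst[symmetric]) (auto simp: split_beta')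
  also have "\<dots> = (\<integral>\<^sup>+x. \<integral>\<^sup>+z. h (x, z) \<partial>lborel \<partial>lborel)"
    by (intro nn_integral_cong nn_integral_translate_lborel[where g="\<lambda>z. h (_, z)"]) measurable
  also have "\<dots> = integral\<^sup>N (lborel \<Otimes>\<^sub>M lborel) h"
    by (subst lborel.nn_integral_fst[symmetric]) auto
  finally show ?thesis .
qed

lemma negN:
  fixes h :: "'a::euclidean_space \<times> 'a \<Rightarrow> ennreal"
  assumes [measurable]: "h \<in> borel_measurable (lborel \<Otimes>\<^sub>M lborel)"
  shows "(\<integral>\<^sup>+w. h (fst w, - snd w) \<partial>(lborel \<Otimes>\<^sub>M lborel)) = integral\<^sup>N (lborel \<Otimes>\<^sub>M lborel) h"
proof -
  have "(\<integral>\<^sup>+w. h (fst w, - snd w) \<partial>(lborel \<Otimes>\<^sub>M lborel))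
     = (\<integral>\<^sup>+x. \<integral>\<^sup>+z. h (x, - z) \<partial>lborel \<partial>lborel)"
    by (subst lborel.nn_integral_fst[symmetric]) (auto simp: split_beta')
  also have "\<dots> = (\<integral>\<^sup>+x. \<integral>\<^sup>+z. h (x, z) \<partial>lborel \<partial>lborel)"
    by (intro nn_integral_cong nn_integral_uminus_lborel[where g="\<lambda>z. h (_, z)"]) measurable
  also have "\<dots> = integral\<^sup>N (lborel \<Otimes>\<^sub>M lborel) h"
    by (subst lborel.nn_integral_fst[symmetric]) auto
  finally show ?thesis .
qed

lemma rot_invariant:
  fixes h :: "'a::euclidean_space \<times> 'a \<Rightarrow> ennreal"
  assumes [measurable]: "h \<in> borel_measurable (lborel \<Otimes>\<^sub>M lborel)"
    and rs: "\<rho>\<^sup>2 + s\<^sup>2 = 1" and rpos: "\<rho> > -1"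
  shows "(\<integral>\<^sup>+w. h (\<rho> *\<^sub>R fst w + s *\<^sub>R snd w, s *\<^sub>R fst w - \<rho> *\<^sub>R snd w) \<partial>(lborel \<Otimes>\<^sub>M lborel))
       = integral\<^sup>N (lborel \<Otimes>\<^sub>M lborel) h"
proof -
  define a where "a = s / (1 + \<rho>)"
  have as: "1 - a * s = \<rho>"
  proof -
    have "a * s = s\<^sup>2 / (1 + \<rho>)" by (simp add: a_def power2_eq_square)
    also have "\<dots> = (1 - \<rho>) * (1 + \<rho>) / (1 + \<rho>)" using rs by (simp add: algebra_simps power2_eq_square)
    also have "\<dots> = 1 - \<rho>" using rpos by simp
    finally show ?thesis by simp
  qed
  have as2: "2 * a - a * a * s = s"
  proof -
    have "2 * a - a * a * s = a * (1 + (1 - a * s))" by (simp add: algebra_simps)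
    also have "\<dots> = a * (1 + \<rho>)" using as by simp
    also have "\<dots> = s" using rpos by (simp add: a_def)
    finally show ?thesis .
  qed
  define h1 where "h1 w = h (fst w + (-a) *\<^sub>R snd w, snd w)" for w
  define h2 where "h2 w = h1 (fst w, snd w + s *\<^sub>R fst w)" for w
  define h3 where "h3 w = h2 (fst w + (-a) *\<^sub>R snd w, snd w)" for w
  have [measurable]: "h1 \<in> borel_measurable (lborel \<Otimes>\<^sub>M lborel)" unfolding h1_def by measurable
  have [measurable]: "h2 \<in> borel_measurable (lborel \<Otimes>\<^sub>M lborel)" unfolding h2_def by measurable
  have [measurable]: "h3 \<in> borel_measurable (lborel \<Otimes>\<^sub>M lborel)" unfolding h3_def by measurable
  have pt: "h (\<rho> *\<^sub>R fst w + s *\<^sub>R snd w, s *\<^sub>R fst w - \<rho> *\<^sub>R snd w) = h3 (fst w, - snd w)" for w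
  proof -
    obtain x z where w: "w = (x, z)" by (cases w)
    have e1: "x + (-a) *\<^sub>R (- z) + (-a) *\<^sub>R (- z + s *\<^sub>R (x + (-a) *\<^sub>R (- z)))
        = (1 - a * s) *\<^sub>R x + (2*a - a * a * s) *\<^sub>R z"
      by (simp add: algebra_simps) (metis mult_2_right scaleR_left_distrib)
    have e2: "- z + s *\<^sub>R (x + (-a) *\<^sub>R (- z)) = s *\<^sub>R x - (1 - a * s) *\<^sub>R z"
      by (simp add: algebra_simps)
    show ?thesis unfolding w h3_def h2_def h1_def fst_conv snd_conv by (subst e1, subst e2, simp only: as as2)
  qed
  have "(\<integral>\<^sup>+w. h (\<rho> *\<^sub>R fst w + s *\<^sub>R snd w, s *\<^sub>R fst w - \<rho> *\<^sub>R snd w) \<partial>(lborel \<Otimes>\<^sub>M lborel))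
     = (\<integral>\<^sup>+w. h3 (fst w, - snd w) \<partial>(lborel \<Otimes>\<^sub>M lborel))" by (simp only: pt)
  also have "\<dots> = integral\<^sup>N (lborel \<Otimes>\<^sub>M lborel) h3" by (rule negN) measurable
  also have "\<dots> = integral\<^sup>N (lborel \<Otimes>\<^sub>M lborel) h2" unfolding h3_def by (rule shearA) measurable
  also have "\<dots> = integral\<^sup>N (lborel \<Otimes>\<^sub>M lborel) h1" unfolding h2_def by (rule shearB) measurable
  also have "\<dots> = integral\<^sup>N (lborel \<Otimes>\<^sub>M lborel) h" unfolding h1_def by (rule shearA) measurable
  finally show ?thesis .
qed

lemma gauss_pair:
  "(std_gaussian \<Otimes>\<^sub>M std_gaussian :: ((real^'n) \<times> (real^'n)) measure)
     = density (lborel \<Otimes>\<^sub>M lborel) (\<lambda>(x,z). ennreal (gauss_density x) * ennreal (gauss_density z))"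
  unfolding std_gaussian_def
  by (rule pair_measure_density)
     (auto intro: sigma_finite_lborel prob_space_imp_sigma_finite prob_space_std_gaussian[unfolded std_gaussian_def])

lemma gd_prod:
  fixes x z :: "real^'n"
  shows "gauss_density x * gauss_density z
   = ((2 * pi) powr (- real CARD('n) / 2))\<^sup>2 * exp (- ((norm x)\<^sup>2 + (norm z)\<^sup>2) / 2)"
proof -
  have "exp (- ((norm x)\<^sup>2 + (norm z)\<^sup>2) / 2) = exp (-(norm x)\<^sup>2/2) * exp (-(norm z)\<^sup>2/2)"
    by (subst exp_add[symmetric]) (rule arg_cong[where f=exp], simp add: field_simps)
  then show ?thesis unfolding gauss_density_def by (simp add: power2_eq_square mult_ac)
qed

lemma norm_rot:
  fixes x z :: "'a::real_inner"
  assumes rs: "\<rho>\<^sup>2 + s\<^sup>2 = 1"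
  shows "(norm (\<rho> *\<^sub>R x + s *\<^sub>R z))\<^sup>2 + (norm (s *\<^sub>R x - \<rho> *\<^sub>R z))\<^sup>2 = (norm x)\<^sup>2 + (norm z)\<^sup>2"
proof -
  have "inner (\<rho> *\<^sub>R x + s *\<^sub>R z) (\<rho> *\<^sub>R x + s *\<^sub>R z) + inner (s *\<^sub>R x - \<rho> *\<^sub>R z) (s *\<^sub>R x - \<rho> *\<^sub>R z)
      = (\<rho>\<^sup>2 + s\<^sup>2) * (inner x x + inner z z)"
    by (simp add: inner_add_left inner_add_right inner_diff_left inner_diff_right
        inner_commute[of z x] algebra_simps power2_eq_square)
  then show ?thesis using rs by (simp only: power2_norm_eq_inner) simp
qed

lemma gauss_pair_invariant:
  fixes k :: "(real^'n) \<times> (real^'n) \<Rightarrow> ennreal"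
  assumes [measurable]: "k \<in> borel_measurable (borel \<Otimes>\<^sub>M borel)"
    and rs: "\<rho>\<^sup>2 + s\<^sup>2 = 1" and rpos: "\<rho> > -1"
  shows "(\<integral>\<^sup>+w. k (\<rho> *\<^sub>R fst w + s *\<^sub>R snd w, s *\<^sub>R fst w - \<rho> *\<^sub>R snd w) \<partial>(std_gaussian \<Otimes>\<^sub>M std_gaussian))
       = integral\<^sup>N (std_gaussian \<Otimes>\<^sub>M std_gaussian) k"
proof -
  define G where "G = (\<lambda>(x::real^'n,z::real^'n). ennreal (gauss_density x) * ennreal (gauss_density z))"
  have Gm[measurable]: "G \<in> borel_measurable (lborel \<Otimes>\<^sub>M lborel)" unfolding G_def by measurable
  have GT: "G (\<rho> *\<^sub>R fst w + s *\<^sub>R snd w, s *\<^sub>R fst w - \<rho> *\<^sub>R snd w) = G w" for w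
  proof -
    obtain x z where w: "w = (x, z)" by (cases w)
    have eq: "gauss_density (\<rho> *\<^sub>R x + s *\<^sub>R z) * gauss_density (s *\<^sub>R x - \<rho> *\<^sub>R z) = gauss_density x * gauss_density z"
      by (simp only: gd_prod norm_rot[OF rs])
    have "ennreal (gauss_density (\<rho> *\<^sub>R x + s *\<^sub>R z)) * ennreal (gauss_density (s *\<^sub>R x - \<rho> *\<^sub>R z))
       = ennreal (gauss_density (\<rho> *\<^sub>R x + s *\<^sub>R z) * gauss_density (s *\<^sub>R x - \<rho> *\<^sub>R z))"
      by (simp add: ennreal_mult gauss_density_pos less_imp_le)
    also have "\<dots> = ennreal (gauss_density x) * ennreal (gauss_density z)"
      by (simp add: eq ennreal_mult gauss_density_pos less_imp_le)
    finally show ?thesis unfolding w G_def by simp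
  qed
  have km[measurable]: "k \<in> borel_measurable (lborel \<Otimes>\<^sub>M lborel)"
    using assms(1) by (simp cong: measurable_cong_sets)
  have "(\<integral>\<^sup>+w. k (\<rho> *\<^sub>R fst w + s *\<^sub>R snd w, s *\<^sub>R fst w - \<rho> *\<^sub>R snd w) \<partial>(std_gaussian \<Otimes>\<^sub>M std_gaussian))
      = (\<integral>\<^sup>+w. G w * k (\<rho> *\<^sub>R fst w + s *\<^sub>R snd w, s *\<^sub>R fst w - \<rho> *\<^sub>R snd w) \<partial>(lborel \<Otimes>\<^sub>M lborel))"
    unfolding gauss_pair G_def[symmetric] by (rule nn_integral_density) measurable
  also have "\<dots> = (\<integral>\<^sup>+w. (\<lambda>w. G w * k w) (\<rho> *\<^sub>R fst w + s *\<^sub>R snd w, s *\<^sub>R fst w - \<rho> *\<^sub>R snd w) \<partial>(lborel \<Otimes>\<^sub>M lborel))"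
    by (simp only: GT)
  also have "\<dots> = (\<integral>\<^sup>+w. G w * k w \<partial>(lborel \<Otimes>\<^sub>M lborel))"
    by (rule rot_invariant[OF _ rs rpos]) measurable
  also have "\<dots> = integral\<^sup>N (std_gaussian \<Otimes>\<^sub>M std_gaussian) k"
    unfolding gauss_pair G_def[symmetric] by (rule nn_integral_density[symmetric]) measurable
  finally show ?thesis .
qed

lemma gauss_distr_rot:
  assumes rs: "\<rho>\<^sup>2 + s\<^sup>2 = 1" and rpos: "\<rho> > -1"
  shows "distr (std_gaussian \<Otimes>\<^sub>M std_gaussian) (std_gaussian \<Otimes>\<^sub>M std_gaussian)
      (\<lambda>w. (\<rho> *\<^sub>R fst w + s *\<^sub>R snd w, s *\<^sub>R fst w - \<rho> *\<^sub>R snd w))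
    = (std_gaussian \<Otimes>\<^sub>M std_gaussian :: ((real^'n) \<times> (real^'n)) measure)"
    (is "distr ?G ?G ?T = ?G")
proof (rule measure_eqI)
  have Tm[measurable]: "?T \<in> measurable ?G ?G" by measurable
  show "sets (distr ?G ?G ?T) = sets ?G" by simp
  fix A assume "A \<in> sets (distr ?G ?G ?T)"
  then have A[measurable]: "A \<in> sets (borel \<Otimes>\<^sub>M borel)" by (simp cong: sets_pair_measure_cong)
  have A'[measurable]: "A \<in> sets ?G" using A by (simp cong: sets_pair_measure_cong)
  have "emeasure (distr ?G ?G ?T) A = (\<integral>\<^sup>+w. indicator A w \<partial>(distr ?G ?G ?T))"
    using A' by simp
  also have "\<dots> = (\<integral>\<^sup>+w. indicator A (?T w) \<partial>?G)"
    by (rule nn_integral_distr) measurable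
  also have "\<dots> = (\<integral>\<^sup>+w. indicator A w \<partial>?G)"
    by (rule gauss_pair_invariant[OF _ rs rpos]) measurable
  also have "\<dots> = emeasure ?G A" using A' by simp
  finally show "emeasure (distr ?G ?G ?T) A = emeasure ?G A" .
qed

lemma gauss_sym:
  fixes H :: "(real^'n) \<times> (real^'n) \<Rightarrow> 'b::{banach, second_countable_topology}"
  assumes [measurable]: "H \<in> borel_measurable (borel \<Otimes>\<^sub>M borel)"
    and rs: "\<rho>\<^sup>2 + s\<^sup>2 = 1" and rpos: "\<rho> > -1"
  shows "(\<integral>w. H (fst w, \<rho> *\<^sub>R fst w + s *\<^sub>R snd w) \<partial>(std_gaussian \<Otimes>\<^sub>M std_gaussian))
       = (\<integral>w. H (\<rho> *\<^sub>R fst w + s *\<^sub>R snd w, fst w) \<partial>(std_gaussian \<Otimes>\<^sub>M std_gaussian))"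
proof -
  let ?G = "std_gaussian \<Otimes>\<^sub>M std_gaussian :: ((real^'n) \<times> (real^'n)) measure"
  let ?T = "\<lambda>w. (\<rho> *\<^sub>R fst w + s *\<^sub>R snd w, s *\<^sub>R fst w - \<rho> *\<^sub>R snd w)"
  define F where "F w = H (\<rho> *\<^sub>R fst w + s *\<^sub>R snd w, fst w)" for w
  have Fm[measurable]: "F \<in> borel_measurable ?G" unfolding F_def by measurable
  have Tm[measurable]: "?T \<in> measurable ?G ?G" by measurable
  have inv: "\<rho> *\<^sub>R (\<rho> *\<^sub>R x + s *\<^sub>R z) + s *\<^sub>R (s *\<^sub>R x - \<rho> *\<^sub>R z) = x" for x z :: "real^'n"
  proof -
    have "\<rho> *\<^sub>R (\<rho> *\<^sub>R x + s *\<^sub>R z) + s *\<^sub>R (s *\<^sub>R x - \<rho> *\<^sub>R z) = (\<rho>\<^sup>2 + s\<^sup>2) *\<^sub>R x"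
      by (simp add: algebra_simps power2_eq_square)
    then show ?thesis using rs by simp
  qed
  have "(\<integral>w. H (fst w, \<rho> *\<^sub>R fst w + s *\<^sub>R snd w) \<partial>?G) = (\<integral>w. F (?T w) \<partial>?G)"
    unfolding F_def by (simp add: inv)
  also have "\<dots> = integral\<^sup>L (distr ?G ?G ?T) F"
    by (rule integral_distr[symmetric]) measurable
  also have "\<dots> = integral\<^sup>L ?G F" by (simp only: gauss_distr_rot[OF rs rpos])
  finally show ?thesis unfolding F_def .
qed


lemma OU_meas[measurable]:
  fixes b :: "real^'n \<Rightarrow> real^'k"
  assumes [measurable]: "b \<in> borel_measurable borel"
  shows "OU \<rho> b \<in> borel_measurable borel"
proof -
  interpret G: prob_space "std_gaussian :: (real^'n) measure" by (rule prob_space_std_gaussian)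
  show ?thesis unfolding OU_def
    by (rule G.borel_measurable_lebesgue_integral) measurable
qed

lemma bounded_integrable:
  fixes b :: "real^'n \<Rightarrow> 'b::{banach,second_countable_topology}"
  assumes "b \<in> borel_measurable borel" "\<And>x. norm (b x) \<le> B"
  shows "integrable std_gaussian b"
proof -
  interpret G: prob_space "std_gaussian :: (real^'n) measure" by (rule prob_space_std_gaussian)
  have [measurable]: "b \<in> borel_measurable borel" by (rule assms(1))
  show ?thesis
    apply (rule G.integrable_const_bound[where B=B])
     apply (simp add: assms(2))
    by measurable
qed

lemma OU_bound:
  fixes b :: "real^'n \<Rightarrow> real^'k"
  assumes [measurable]: "b \<in> borel_measurable borel" and bb: "\<And>x. norm (b x) \<le> B"
  shows "norm (OU \<rho> b x) \<le> B"
proof -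
  interpret G: prob_space "std_gaussian :: (real^'n) measure" by (rule prob_space_std_gaussian)
  let ?F = "\<lambda>z. b (\<rho> *\<^sub>R x + sqrt (1 - \<rho>\<^sup>2) *\<^sub>R z)"
  have "norm (OU \<rho> b x) \<le> (\<integral>z. norm (?F z) \<partial>std_gaussian)"
    unfolding OU_def by (rule integral_norm_bound)
  also have "\<dots> \<le> B"
    by (rule G.integral_le_const) (auto intro!: bounded_integrable[where B=B] simp: bb)
  finally show ?thesis .
qed

lemma bil_fubini:
  fixes a b :: "real^'n \<Rightarrow> real^'k"
  assumes [measurable]: "a \<in> borel_measurable borel" "b \<in> borel_measurable borel"
    and ab: "\<And>x. norm (a x) \<le> A" and bb: "\<And>x. norm (b x) \<le> B"
  shows "(\<integral>w. inner (a (fst w)) (b (\<rho> *\<^sub>R fst w + sqrt (1 - \<rho>\<^sup>2) *\<^sub>R snd w)) \<partial>(std_gaussian \<Otimes>\<^sub>M std_gaussian))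
     = (\<integral>x. inner (a x) (OU \<rho> b x) \<partial>std_gaussian)"
proof -
  interpret G: prob_space "std_gaussian :: (real^'n) measure" by (rule prob_space_std_gaussian)
  interpret P: pair_prob_space "std_gaussian :: (real^'n) measure" "std_gaussian :: (real^'n) measure" ..
  have A0: "0 \<le> A" using ab[of 0] norm_ge_zero order_trans by blast
  have bnd: "\<bar>inner (a p) (b q)\<bar> \<le> A * B" for p q
  proof -
    have "\<bar>inner (a p) (b q)\<bar> \<le> norm (a p) * norm (b q)" by (rule Cauchy_Schwarz_ineq2)
    also have "\<dots> \<le> A * B" using ab bb A0 by (intro mult_mono) auto
    finally show ?thesis .
  qed
  have int: "integrable (std_gaussian \<Otimes>\<^sub>M std_gaussian)
      (\<lambda>w. inner (a (fst w)) (b (\<rho> *\<^sub>R fst w + sqrt (1 - \<rho>\<^sup>2) *\<^sub>R snd w)))"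
    by (rule P.integrable_const_bound[where B="A*B"]) (auto simp: bnd)
  have "(\<integral>w. inner (a (fst w)) (b (\<rho> *\<^sub>R fst w + sqrt (1 - \<rho>\<^sup>2) *\<^sub>R snd w)) \<partial>(std_gaussian \<Otimes>\<^sub>M std_gaussian))
     = (\<integral>x. (\<integral>z. inner (a x) (b (\<rho> *\<^sub>R x + sqrt (1 - \<rho>\<^sup>2) *\<^sub>R z)) \<partial>std_gaussian) \<partial>std_gaussian)"
    using P.integral_fst'[OF int] by simp
  also have "\<dots> = (\<integral>x. inner (a x) (OU \<rho> b x) \<partial>std_gaussian)"
    unfolding OU_def
    by (intro Bochner_Integration.integral_cong refl integral_inner_right bounded_integrable[where B=B]) (auto simp: bb)
  finally show ?thesis .
qed

lemma bil_sym:
  fixes a b :: "real^'n \<Rightarrow> real^'k"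
  assumes [measurable]: "a \<in> borel_measurable borel" "b \<in> borel_measurable borel"
    and r: "0 < \<rho>" "\<rho> < 1"
  shows "(\<integral>w. inner (a (fst w)) (b (\<rho> *\<^sub>R fst w + sqrt (1 - \<rho>\<^sup>2) *\<^sub>R snd w)) \<partial>(std_gaussian \<Otimes>\<^sub>M std_gaussian))
     = (\<integral>w. inner (b (fst w)) (a (\<rho> *\<^sub>R fst w + sqrt (1 - \<rho>\<^sup>2) *\<^sub>R snd w)) \<partial>(std_gaussian \<Otimes>\<^sub>M std_gaussian))"
proof -
  have rs: "\<rho>\<^sup>2 + (sqrt (1 - \<rho>\<^sup>2))\<^sup>2 = 1"
  proof -
    have "\<rho>\<^sup>2 \<le> 1" using r by (simp add: abs_square_le_1)
    then show ?thesis by simp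
  qed
  have "(\<integral>w. inner (a (fst w)) (b (\<rho> *\<^sub>R fst w + sqrt (1 - \<rho>\<^sup>2) *\<^sub>R snd w)) \<partial>(std_gaussian \<Otimes>\<^sub>M std_gaussian))
     = (\<integral>w. (\<lambda>(p,q). inner (a p) (b q)) (fst w, \<rho> *\<^sub>R fst w + sqrt (1 - \<rho>\<^sup>2) *\<^sub>R snd w) \<partial>(std_gaussian \<Otimes>\<^sub>M std_gaussian))"
    by simp
  also have "\<dots> = (\<integral>w. (\<lambda>(p,q). inner (a p) (b q)) (\<rho> *\<^sub>R fst w + sqrt (1 - \<rho>\<^sup>2) *\<^sub>R snd w, fst w) \<partial>(std_gaussian \<Otimes>\<^sub>M std_gaussian))"
    by (rule gauss_sym[OF _ rs]) (use r in auto)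
  also have "\<dots> = (\<integral>w. inner (b (fst w)) (a (\<rho> *\<^sub>R fst w + sqrt (1 - \<rho>\<^sup>2) *\<^sub>R snd w)) \<partial>(std_gaussian \<Otimes>\<^sub>M std_gaussian))"
    by (simp add: inner_commute)
  finally show ?thesis .
qed

lemma bil_integrable:
  fixes a b :: "real^'n \<Rightarrow> real^'k"
  assumes [measurable]: "a \<in> borel_measurable borel" "b \<in> borel_measurable borel"
    and ab: "\<And>x. norm (a x) \<le> A" and bb: "\<And>x. norm (b x) \<le> B"
  shows "integrable (std_gaussian \<Otimes>\<^sub>M std_gaussian)
      (\<lambda>w. inner (a (fst w)) (b (\<rho> *\<^sub>R fst w + sqrt (1 - \<rho>\<^sup>2) *\<^sub>R snd w)))"
proof -
  interpret G: prob_space "std_gaussian :: (real^'n) measure" by (rule prob_space_std_gaussian)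
  interpret P: pair_prob_space "std_gaussian :: (real^'n) measure" "std_gaussian :: (real^'n) measure" ..
  have A0: "0 \<le> A" using ab[of 0] norm_ge_zero order_trans by blast
  have bnd: "\<bar>inner (a p) (b q)\<bar> \<le> A * B" for p q
  proof -
    have "\<bar>inner (a p) (b q)\<bar> \<le> norm (a p) * norm (b q)" by (rule Cauchy_Schwarz_ineq2)
    also have "\<dots> \<le> A * B" using ab bb A0 by (intro mult_mono) auto
    finally show ?thesis .
  qed
  show ?thesis
    by (rule P.integrable_const_bound[where B="A*B"]) (auto simp: bnd)
qed

lemma bil_bound:
  fixes a b :: "real^'n \<Rightarrow> real^'k"
  assumes [measurable]: "a \<in> borel_measurable borel" "b \<in> borel_measurable borel"
    and ab: "\<And>x. norm (a x) \<le> A" and bb: "\<And>x. norm (b x) \<le> B"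
  shows "\<bar>\<integral>w. inner (a (fst w)) (b (\<rho> *\<^sub>R fst w + sqrt (1 - \<rho>\<^sup>2) *\<^sub>R snd w)) \<partial>(std_gaussian \<Otimes>\<^sub>M std_gaussian)\<bar> \<le> A * B"
proof -
  interpret G: prob_space "std_gaussian :: (real^'n) measure" by (rule prob_space_std_gaussian)
  interpret P: pair_prob_space "std_gaussian :: (real^'n) measure" "std_gaussian :: (real^'n) measure" ..
  have A0: "0 \<le> A" using ab[of 0] norm_ge_zero order_trans by blast
  have bnd: "\<bar>inner (a p) (b q)\<bar> \<le> A * B" for p q
  proof -
    have "\<bar>inner (a p) (b q)\<bar> \<le> norm (a p) * norm (b q)" by (rule Cauchy_Schwarz_ineq2)
    also have "\<dots> \<le> A * B" using ab bb A0 by (intro mult_mono) auto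
    finally show ?thesis .
  qed
  have "\<bar>\<integral>w. inner (a (fst w)) (b (\<rho> *\<^sub>R fst w + sqrt (1 - \<rho>\<^sup>2) *\<^sub>R snd w)) \<partial>(std_gaussian \<Otimes>\<^sub>M std_gaussian)\<bar>
     \<le> (\<integral>w. \<bar>inner (a (fst w)) (b (\<rho> *\<^sub>R fst w + sqrt (1 - \<rho>\<^sup>2) *\<^sub>R snd w))\<bar> \<partial>(std_gaussian \<Otimes>\<^sub>M std_gaussian))"
    using integral_norm_bound[of "std_gaussian \<Otimes>\<^sub>M std_gaussian"
        "\<lambda>w. inner (a (fst w)) (b (\<rho> *\<^sub>R fst w + sqrt (1 - \<rho>\<^sup>2) *\<^sub>R snd w))"] by simp
  also have "\<dots> \<le> A * B"
    by (rule P.integral_le_const) (auto simp: bnd intro!: integrable_abs bil_integrable[where A=A and B=B] ab bb)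
  finally show ?thesis .
qed

lemma admissible_bounds:
  assumes "admissible g"
  shows "g \<in> borel_measurable borel" "\<And>x. norm (g x) \<le> 1" "(\<integral>x. g x \<partial>std_gaussian) = 0"
  using assms unfolding admissible_def by auto

lemma first_variation:
  fixes f g :: "real^'n \<Rightarrow> real^'k"
  assumes r: "0 < \<rho>" "\<rho> < 1" and opt: "optimally_stable \<rho> f" and ag: "admissible g"
  shows "(\<integral>x. inner (g x) (OU \<rho> f x) \<partial>std_gaussian) \<le> (\<integral>x. inner (f x) (OU \<rho> f x) \<partial>std_gaussian)"
proof -
  interpret G: prob_space "std_gaussian :: (real^'n) measure" by (rule prob_space_std_gaussian)
  interpret P: pair_prob_space "std_gaussian :: (real^'n) measure" "std_gaussian :: (real^'n) measure" ..
  have af: "admissible f" and mx: "\<And>h :: real^'n \<Rightarrow> real^'k. admissible h \<Longrightarrow> noise_stab \<rho> h \<le> noise_stab \<rho> f"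
    using opt unfolding optimally_stable_def by auto
  note fa = admissible_bounds[OF af] and ga = admissible_bounds[OF ag]
  have fm[measurable]: "f \<in> borel_measurable borel" and gm[measurable]: "g \<in> borel_measurable borel"
    using fa ga by auto
  define D where "D x = g x - f x" for x
  have Dm[measurable]: "D \<in> borel_measurable borel" unfolding D_def by measurable
  have Db: "norm (D x) \<le> 2" for x
  proof -
    have "norm (D x) \<le> norm (g x) + norm (f x)" unfolding D_def by (rule norm_triangle_ineq4)
    also have "\<dots> \<le> 2" using fa(2)[of x] ga(2)[of x] by simp
    finally show ?thesis .
  qed
  define Bil where "Bil a b = (\<integral>w. inner (a (fst w)) (b (\<rho> *\<^sub>R fst w + sqrt (1 - \<rho>\<^sup>2) *\<^sub>R snd w)) \<partial>(std_gaussian \<Otimes>\<^sub>M std_gaussian))"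
    for a b :: "real^'n \<Rightarrow> real^'k"
  have ns: "noise_stab \<rho> h = Bil h h" for h unfolding Bil_def noise_stab_def ..
  define L where "L = (\<integral>x. inner (g x) (OU \<rho> f x) \<partial>std_gaussian) - (\<integral>x. inner (f x) (OU \<rho> f x) \<partial>std_gaussian)"
  have ub: "norm (OU \<rho> f x) \<le> 1" for x by (rule OU_bound[OF fm fa(2)])
  have ib: "\<bar>inner (a x) (OU \<rho> f x)\<bar> \<le> 1" if "\<And>x. norm (a x) \<le> 1" for a :: "real^'n \<Rightarrow> real^'k" and x
  proof -
    have "\<bar>inner (a x) (OU \<rho> f x)\<bar> \<le> norm (a x) * norm (OU \<rho> f x)" by (rule Cauchy_Schwarz_ineq2)
    also have "\<dots> \<le> 1 * 1" using that[of x] ub[of x] by (intro mult_mono) auto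
    finally show ?thesis by simp
  qed
  have BDf: "Bil D f = L"
  proof -
    have "Bil D f = (\<integral>x. inner (D x) (OU \<rho> f x) \<partial>std_gaussian)"
      unfolding Bil_def by (rule bil_fubini[where A=2 and B=1]) (auto simp: Db fa)
    also have "\<dots> = (\<integral>x. inner (g x) (OU \<rho> f x) - inner (f x) (OU \<rho> f x) \<partial>std_gaussian)"
      unfolding D_def by (simp add: inner_diff_left)
    also have "\<dots> = L"
    proof -
      have i1: "integrable std_gaussian (\<lambda>x. inner (g x) (OU \<rho> f x))"
        apply (rule bounded_integrable[where B=1]) apply measurable using ib[OF ga(2)] by simp
      have i2: "integrable std_gaussian (\<lambda>x. inner (f x) (OU \<rho> f x))"
        apply (rule bounded_integrable[where B=1]) apply measurable using ib[OF fa(2)] by simp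
      show ?thesis unfolding L_def using i1 i2 by simp
    qed
    finally show ?thesis .
  qed
  have BfD: "Bil f D = Bil D f" unfolding Bil_def by (rule bil_sym[OF fm Dm r])
  have QD: "\<bar>Bil D D\<bar> \<le> 4"
    using bil_bound[OF Dm Dm Db Db, of \<rho>] unfolding Bil_def by simp
  have Lt: "L \<le> 2 * t" if t: "0 < t" "t \<le> 1" for t
  proof -
    define h where "h x = f x + t *\<^sub>R D x" for x
    have hm[measurable]: "h \<in> borel_measurable borel" unfolding h_def by measurable
    have ah: "admissible h"
    proof -
      have "norm (h x) \<le> 1" for x
      proof -
        have "h x = (1 - t) *\<^sub>R f x + t *\<^sub>R g x" unfolding h_def D_def by (simp add: algebra_simps)
        then have "norm (h x) \<le> norm ((1 - t) *\<^sub>R f x) + norm (t *\<^sub>R g x)" by (metis norm_triangle_ineq)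
        also have "\<dots> = (1 - t) * norm (f x) + t * norm (g x)" using t by simp
        also have "\<dots> \<le> (1 - t) * 1 + t * 1" using t fa(2)[of x] ga(2)[of x]
          by (intro add_mono mult_left_mono) auto
        finally show ?thesis by simp
      qed
      moreover have "(\<integral>x. h x \<partial>std_gaussian) = 0"
      proof -
        have ifm: "integrable std_gaussian f" by (rule bounded_integrable[OF fm fa(2)])
        have igm: "integrable std_gaussian g" by (rule bounded_integrable[OF gm ga(2)])
        have "(\<integral>x. h x \<partial>std_gaussian) = (\<integral>x. f x \<partial>std_gaussian) + t *\<^sub>R ((\<integral>x. g x \<partial>std_gaussian) - (\<integral>x. f x \<partial>std_gaussian))"
          unfolding h_def D_def using ifm igm by simp
        then show ?thesis using fa(3) ga(3) by simp
      qed
      ultimately show ?thesis unfolding admissible_def by auto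
    qed
    have "Bil h h = Bil f f + t * (Bil D f + Bil f D) + t\<^sup>2 * Bil D D"
    proof -
      have pw: "inner (h x) (h y) = inner (f x) (f y) + t * (inner (D x) (f y) + inner (f x) (D y)) + t\<^sup>2 * inner (D x) (D y)" for x y
        unfolding h_def by (simp add: inner_add_left inner_add_right algebra_simps power2_eq_square)
      note i1 = bil_integrable[OF fm fm fa(2) fa(2)] bil_integrable[OF Dm fm Db fa(2)]
        bil_integrable[OF fm Dm fa(2) Db] bil_integrable[OF Dm Dm Db Db]
      have "has_bochner_integral (std_gaussian \<Otimes>\<^sub>M std_gaussian)
          (\<lambda>w. inner (f (fst w)) (f (\<rho> *\<^sub>R fst w + sqrt (1 - \<rho>\<^sup>2) *\<^sub>R snd w))
             + t * (inner (D (fst w)) (f (\<rho> *\<^sub>R fst w + sqrt (1 - \<rho>\<^sup>2) *\<^sub>R snd w))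
                   + inner (f (fst w)) (D (\<rho> *\<^sub>R fst w + sqrt (1 - \<rho>\<^sup>2) *\<^sub>R snd w)))
             + t\<^sup>2 * inner (D (fst w)) (D (\<rho> *\<^sub>R fst w + sqrt (1 - \<rho>\<^sup>2) *\<^sub>R snd w)))
          (Bil f f + t * (Bil D f + Bil f D) + t\<^sup>2 * Bil D D)"
        unfolding Bil_def
        by (intro has_bochner_integral_add has_bochner_integral_mult_right has_bochner_integral_integrable i1)
      then show ?thesis unfolding Bil_def[of h h] pw by (rule has_bochner_integral_integral_eq)
    qed
    moreover have "Bil h h \<le> Bil f f" using mx[OF ah] by (simp add: ns)
    ultimately have "t * (2 * L) + t\<^sup>2 * Bil D D \<le> 0" using BDf BfD by simp
    moreover have "- 4 \<le> Bil D D" using QD by (simp add: abs_le_iff)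
    then have "t\<^sup>2 * (- 4) \<le> t\<^sup>2 * Bil D D" by (rule mult_left_mono) simp
    moreover have "t\<^sup>2 * 4 = t * (t * 4)" by (simp add: power2_eq_square)
    ultimately have "t * (2 * L) \<le> t * (t * 4)" by linarith
    then have "2 * L \<le> t * 4" by (rule mult_left_le_imp_le[OF _ t(1)])
    then show ?thesis by linarith
  qed
  have "L \<le> 0"
  proof (rule ccontr)
    assume "\<not> L \<le> 0"
    then have "L > 0" by simp
    then have "L \<le> 2 * min 1 (L/4)" by (intro Lt) auto
    moreover have "min 1 (L/4) \<le> L/4" by (rule min.cobounded2)
    ultimately show False using \<open>L > 0\<close> by linarith
  qed
  then show ?thesis unfolding L_def by simp
qed


lemma pl_eq:
  fixes a v :: "'a::real_inner"
  assumes a: "a \<noteq> 0" and t: "t > 0"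
  shows "(norm (a - t *\<^sub>R v) - norm a) / t = (- 2 * inner a v + t * (norm v)\<^sup>2) / (norm (a - t *\<^sub>R v) + norm a)"
proof -
  have na: "norm a > 0" using a by simp
    have p2: "(norm (a - t *\<^sub>R v))\<^sup>2 = (norm a)\<^sup>2 - 2 * t * inner a v + t\<^sup>2 * (norm v)\<^sup>2"
      unfolding power2_norm_eq_inner
      by (simp add: inner_diff_left inner_diff_right inner_commute[of v a] power2_eq_square algebra_simps)
    have pq: "norm (a - t *\<^sub>R v) + norm a > 0" using na by (simp add: add_nonneg_pos)
    have "(norm (a - t *\<^sub>R v) - norm a) * (norm (a - t *\<^sub>R v) + norm a) = t * (- 2 * inner a v + t * (norm v)\<^sup>2)"
      using p2 by (simp add: algebra_simps power2_eq_square)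
    then show ?thesis using t pq by (subst frac_eq_eq) auto
qed

lemma pl_0:
  fixes a v :: "'a::real_inner"
  assumes a: "a \<noteq> 0"
  shows "(- 2 * inner a v + 0 * (norm v)\<^sup>2) / (norm (a - 0 *\<^sub>R v) + norm a) = - inner ((1 / norm a) *\<^sub>R a) v"
proof -
  have na: "norm a > 0" using a by simp
  have "(- 2 * inner a v + 0 * (norm v)\<^sup>2) / (norm (a - 0 *\<^sub>R v) + norm a) = (- 2 * inner a v) / (2 * norm a)"
    by simp
  also have "\<dots> = - inner a v / norm a" by simp
  also have "\<dots> = - inner ((1 / norm a) *\<^sub>R a) v" by (simp add: inner_scaleR_left)
  finally show ?thesis .
qed

lemma pl_cont:
  fixes a v :: "'a::real_inner"
  assumes a: "a \<noteq> 0"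
  shows "isCont (\<lambda>t. (- 2 * inner a v + t * (norm v)\<^sup>2) / (norm (a - t *\<^sub>R v) + norm a)) 0"
  by (intro continuous_intros) (use a in auto)

lemma pointwise_limit:
  fixes a v :: "'a::real_inner"
  assumes a: "a \<noteq> 0"
  shows "(\<lambda>n. (norm (a - inverse (real (Suc n)) *\<^sub>R v) - norm a) / inverse (real (Suc n)))
          \<longlonglongrightarrow> - inner ((1 / norm a) *\<^sub>R a) v"
proof -
  define K where "K t = (- 2 * inner a v + t * (norm v)\<^sup>2) / (norm (a - t *\<^sub>R v) + norm a)" for t :: real
  have "(\<lambda>n. K (inverse (real (Suc n)))) \<longlonglongrightarrow> K 0"
    by (rule isCont_tendsto_compose[OF _ LIMSEQ_inverse_real_of_nat]) (unfold K_def, rule pl_cont[OF a])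
  moreover have "(\<lambda>n. (norm (a - inverse (real (Suc n)) *\<^sub>R v) - norm a) / inverse (real (Suc n)))
      = (\<lambda>n. K (inverse (real (Suc n))))"
    unfolding K_def by (rule ext, rule pl_eq[OF a]) simp
  ultimately show ?thesis using pl_0[OF a, of v] unfolding K_def by simp
qed

lemma cs_eq:
  fixes F W :: "'a::real_inner"
  assumes F: "norm F \<le> 1" and e: "inner F W = norm W"
  shows "norm W *\<^sub>R F = W"
proof -
  define N where "N = norm W"
  have "inner (N *\<^sub>R F - W) (N *\<^sub>R F - W) = N * N * inner F F - 2 * N * inner F W + inner W W"
    by (simp add: inner_diff_left inner_diff_right inner_commute[of W F] algebra_simps)
  also have "inner W W = N * N" unfolding N_def by (simp add: power2_eq_square[symmetric] power2_norm_eq_inner[symmetric])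
  also have "inner F F = (norm F)\<^sup>2" by (simp add: power2_norm_eq_inner)
  also have "inner F W = N" using e by (simp add: N_def)
  finally have eq: "inner (N *\<^sub>R F - W) (N *\<^sub>R F - W) = N * N * ((norm F)\<^sup>2 - 1)" by (simp add: algebra_simps)
  have "(norm F)\<^sup>2 \<le> 1" using F by (simp add: abs_square_le_1)
  then have "N * N * ((norm F)\<^sup>2 - 1) \<le> 0" by (simp add: mult_nonneg_nonpos)
  then have "inner (N *\<^sub>R F - W) (N *\<^sub>R F - W) \<le> 0" using eq by simp
  then have "N *\<^sub>R F - W = 0" by (simp add: inner_gt_zero_iff[symmetric] not_less[symmetric])
  then show ?thesis unfolding N_def by simp
qed

lemma dual_step:
  fixes f u :: "real^'n \<Rightarrow> real^'k"
  assumes af: "admissible f"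
    and um[measurable]: "u \<in> borel_measurable borel" and ub: "\<And>x. norm (u x) \<le> 1"
    and FV: "\<And>g :: real^'n \<Rightarrow> real^'k. admissible g \<Longrightarrow>
       (\<integral>x. inner (g x) (u x) \<partial>std_gaussian) \<le> (\<integral>x. inner (f x) (u x) \<partial>std_gaussian)"
  shows "\<exists>l. AE x in std_gaussian. norm (u x - l) *\<^sub>R f x = u x - l"
proof -
  interpret G: prob_space "std_gaussian :: (real^'n) measure" by (rule prob_space_std_gaussian)
  note fa = admissible_bounds[OF af]
  have fm[measurable]: "f \<in> borel_measurable borel" using fa by simp
  define \<phi> where "\<phi> l = (\<integral>x. norm (u x - l) \<partial>std_gaussian)" for l :: "real^'k"
  have nb: "norm (u x - l) \<le> 1 + norm l" for x l
    using norm_triangle_ineq4[of "u x" l] ub[of x] by simp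
  have intn: "integrable std_gaussian (\<lambda>x. norm (u x - l))" for l
    by (rule bounded_integrable[where B="1 + norm l"]) (measurable, simp add: nb)
  have lip: "\<phi> a - \<phi> b \<le> norm (a - b)" for a b
  proof -
    have "\<phi> a - \<phi> b = (\<integral>x. norm (u x - a) - norm (u x - b) \<partial>std_gaussian)"
      unfolding \<phi>_def using intn by simp
    also have "\<dots> \<le> norm (a - b)"
    proof (rule G.integral_le_const)
      show "integrable std_gaussian (\<lambda>x. norm (u x - a) - norm (u x - b))" using intn by simp
      have "norm (u x - a) - norm (u x - b) \<le> norm (a - b)" for x
        using norm_triangle_ineq2[of "u x - a" "u x - b"] by (simp add: norm_minus_commute)
      then show "AE x in std_gaussian. norm (u x - a) - norm (u x - b) \<le> norm (a - b)" by simp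
    qed
    finally show ?thesis .
  qed
  have cont: "continuous_on UNIV \<phi>"
  proof (rule lipschitz_on_continuous_on)
    show "1-lipschitz_on UNIV \<phi>"
    proof (rule lipschitz_onI)
      fix x y :: "real^'k"
      show "dist (\<phi> x) (\<phi> y) \<le> 1 * dist x y"
        using lip[of x y] lip[of y x] by (simp add: dist_real_def dist_norm norm_minus_commute abs_le_iff)
    qed simp
  qed
  have lower: "norm l - 1 \<le> \<phi> l" for l
  proof -
    have "norm l - 1 \<le> norm (u x - l)" for x
      using norm_triangle_ineq4[of "u x" "u x - l"] ub[of x] by simp
    then show ?thesis unfolding \<phi>_def by (intro G.integral_ge_const intn) simp
  qed
  have phi0: "\<phi> 0 \<le> 1"
    unfolding \<phi>_def by (intro G.integral_le_const intn) (simp add: ub)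
  obtain l0 where l0c: "l0 \<in> cball 0 2" and l0m: "\<forall>y\<in>cball 0 2. \<phi> l0 \<le> \<phi> y"
    using continuous_attains_inf[OF compact_cball _ continuous_on_subset[OF cont], of 0 2] by auto
  have glob: "\<phi> l0 \<le> \<phi> l" for l
  proof (cases "norm l \<le> 2")
    case True then show ?thesis using l0m by simp
  next
    case False
    have "\<phi> l0 \<le> \<phi> 0" using l0m by simp
    then show ?thesis using False lower[of l] phi0 by linarith
  qed
  define w where "w x = u x - l0" for x
  define e where "e x = (if w x = 0 then 0 else (1 / norm (w x)) *\<^sub>R w x)" for x
  define Z where "Z = {x. w x = 0}"
  define \<mu> where "\<mu> = measure std_gaussian Z"
  define m where "m = (\<integral>x. e x \<partial>std_gaussian)"
  have wm[measurable]: "w \<in> borel_measurable borel" unfolding w_def by measurable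
  have em[measurable]: "e \<in> borel_measurable borel" unfolding e_def by measurable
  have Zm[measurable]: "Z \<in> sets borel" unfolding Z_def by measurable
  have eZ: "x \<in> Z \<Longrightarrow> e x = 0" for x unfolding e_def Z_def by simp
  have wZ: "x \<notin> Z \<Longrightarrow> w x \<noteq> 0" for x unfolding Z_def by simp
  have eb: "norm (e x) \<le> 1" for x unfolding e_def by simp
  have ie: "integrable std_gaussian e" by (rule bounded_integrable[OF em eb])
  have we: "inner (e x) (w x) = norm (w x)" for x
  proof (cases "w x = 0")
    case True then show ?thesis unfolding e_def by simp
  next
    case False
    have "inner (w x) (w x) = norm (w x) * norm (w x)"
      by (simp add: power2_eq_square[symmetric] power2_norm_eq_inner[symmetric])
    then show ?thesis unfolding e_def using False by simp
  qed
  have \<mu>0: "0 \<le> \<mu>" unfolding \<mu>_def by simp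
  have deriv: "inner m v \<le> \<mu> * norm v" for v
  proof -
    define tn where "tn n = inverse (real (Suc n))" for n :: nat
    define sn where "sn n x = (norm (w x - tn n *\<^sub>R v) - norm (w x)) / tn n" for n x
    define q where "q x = (if w x = 0 then norm v else - inner (e x) v)" for x
    have tpos: "tn n > 0" for n unfolding tn_def by simp
    have snm[measurable]: "sn n \<in> borel_measurable borel" for n unfolding sn_def by measurable
    have qm[measurable]: "q \<in> borel_measurable borel" unfolding q_def by measurable
    have lim: "(\<lambda>n. sn n x) \<longlonglongrightarrow> q x" for x
    proof (cases "w x = 0")
      case True
      have "sn n x = norm v" for n using tpos[of n] unfolding sn_def True by simp
      then show ?thesis unfolding q_def using True by simp
    next
      case False
      show ?thesis unfolding q_def sn_def tn_def e_def using False pointwise_limit[OF False, of v] by simp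
    qed
    have bnd: "\<bar>sn n x\<bar> \<le> norm v" for n x
    proof -
      have "\<bar>norm (w x - tn n *\<^sub>R v) - norm (w x)\<bar> \<le> norm ((w x - tn n *\<^sub>R v) - w x)"
        by (rule norm_triangle_ineq3)
      also have "\<dots> = tn n * norm v" using tpos[of n] by simp
      finally have "\<bar>norm (w x - tn n *\<^sub>R v) - norm (w x)\<bar> / tn n \<le> norm v"
        using tpos[of n] by (simp add: divide_le_eq mult.commute)
      then show ?thesis unfolding sn_def using tpos[of n] by simp
    qed
    have ic: "integrable std_gaussian (\<lambda>x. norm v)"
      by (rule bounded_integrable[where B="norm v"]) auto
    have conv: "(\<lambda>n. \<integral>x. sn n x \<partial>std_gaussian) \<longlonglongrightarrow> (\<integral>x. q x \<partial>std_gaussian)"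
      by (rule integral_dominated_convergence[where w="\<lambda>x. norm v"]) (auto simp: lim bnd ic)
    have nonneg: "0 \<le> (\<integral>x. sn n x \<partial>std_gaussian)" for n
    proof -
      have sx: "sn n x = (norm (u x - (l0 + tn n *\<^sub>R v)) - norm (u x - l0)) / tn n" for x
        unfolding sn_def w_def by (simp add: diff_diff_eq)
      have "(\<integral>x. sn n x \<partial>std_gaussian) = (\<integral>x. (norm (u x - (l0 + tn n *\<^sub>R v)) - norm (u x - l0)) / tn n \<partial>std_gaussian)"
        by (simp only: sx)
      also have "\<dots> = (\<integral>x. norm (u x - (l0 + tn n *\<^sub>R v)) - norm (u x - l0) \<partial>std_gaussian) / tn n"
        by (rule integral_divide_zero)
      also have "\<dots> = (\<phi> (l0 + tn n *\<^sub>R v) - \<phi> l0) / tn n"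
        unfolding \<phi>_def using intn by simp
      finally have "(\<integral>x. sn n x \<partial>std_gaussian) = (\<phi> (l0 + tn n *\<^sub>R v) - \<phi> l0) / tn n" .
      moreover have "0 \<le> \<phi> (l0 + tn n *\<^sub>R v) - \<phi> l0" using glob by simp
      ultimately show ?thesis using tpos[of n] by simp
    qed
    have q0: "0 \<le> (\<integral>x. q x \<partial>std_gaussian)"
      by (rule LIMSEQ_le_const[OF conv]) (use nonneg in auto)
    have qeq: "q x = indicator Z x * norm v - inner (e x) v" for x
      unfolding q_def Z_def e_def by (simp add: indicator_def)
    have ii: "integrable std_gaussian (\<lambda>x. indicator Z x * norm v)"
      by (rule bounded_integrable[where B="norm v"], measurable) (simp add: indicator_def)
    have iev: "integrable std_gaussian (\<lambda>x. inner (e x) v)"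
      by (intro integrable_inner_left ie)
    have "(\<integral>x. q x \<partial>std_gaussian) = (\<integral>x. indicator Z x * norm v \<partial>std_gaussian) - (\<integral>x. inner (e x) v \<partial>std_gaussian)"
      unfolding qeq using ii iev by simp
    also have "\<dots> = \<mu> * norm v - inner m v"
      unfolding \<mu>_def m_def using ie by (simp add: integral_indicator)
    finally show ?thesis using q0 by simp
  qed
  have mb: "norm m \<le> \<mu>"
  proof (cases "m = 0")
    case True then show ?thesis using \<mu>0 by simp
  next
    case False
    have "norm m * norm m \<le> \<mu> * norm m"
      using deriv[of m] by (simp add: power2_eq_square[symmetric] power2_norm_eq_inner[symmetric])
    then show ?thesis using False by simp
  qed
  define c where "c = (if \<mu> = 0 then 0 else (- (1/\<mu>)) *\<^sub>R m)"
  have nc: "norm c \<le> 1"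
  proof (cases "\<mu> = 0")
    case True then show ?thesis unfolding c_def by simp
  next
    case False
    then have "\<mu> > 0" using \<mu>0 by simp
    then show ?thesis unfolding c_def using False mb by (simp add: divide_le_eq)
  qed
  define g where "g x = e x + indicator Z x *\<^sub>R c" for x
  have gm[measurable]: "g \<in> borel_measurable borel" unfolding g_def by measurable
  have gb: "norm (g x) \<le> 1" for x
  proof (cases "x \<in> Z")
    case True then show ?thesis unfolding g_def using eZ[OF True] nc by simp
  next
    case False then show ?thesis unfolding g_def using eb[of x] by simp
  qed
  have ig: "integrable std_gaussian (\<lambda>x. indicator Z x *\<^sub>R c)"
    by (rule bounded_integrable[where B="norm c"], measurable) (simp add: indicator_def)
  have g0: "(\<integral>x. g x \<partial>std_gaussian) = 0"
  proof -
    have iZ: "integrable std_gaussian (indicator Z :: real^'n \<Rightarrow> real)"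
      by (rule bounded_integrable[where B=1], measurable)
    have "(\<integral>x. g x \<partial>std_gaussian) = m + \<mu> *\<^sub>R c"
      unfolding g_def m_def \<mu>_def using ie ig iZ by (simp add: integral_indicator)
    also have "\<dots> = 0"
    proof (cases "\<mu> = 0")
      case True then show ?thesis using mb unfolding c_def by simp
    next
      case False then show ?thesis unfolding c_def by simp
    qed
    finally show ?thesis .
  qed
  have ag: "admissible g" unfolding admissible_def using gm gb g0 by auto
  have gw: "inner (g x) (w x) = norm (w x)" for x
  proof (cases "x \<in> Z")
    case True then show ?thesis unfolding g_def Z_def by simp
  next
    case False then show ?thesis unfolding g_def using we by simp
  qed
  have shift: "(\<integral>x. inner (a x) (u x) \<partial>std_gaussian) = (\<integral>x. inner (a x) (w x) \<partial>std_gaussian)"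
    if am[measurable]: "a \<in> borel_measurable borel" and ab: "\<And>x. norm (a x) \<le> 1"
      and a0: "(\<integral>x. a x \<partial>std_gaussian) = 0" for a :: "real^'n \<Rightarrow> real^'k"
  proof -
    have ia: "integrable std_gaussian a" by (rule bounded_integrable[OF am ab])
    have wb: "norm (w x) \<le> 1 + norm l0" for x unfolding w_def by (rule nb)
    have iw: "integrable std_gaussian (\<lambda>x. inner (a x) (w x))"
    proof (rule bounded_integrable[where B="1 + norm l0"])
      show "\<And>x. norm (inner (a x) (w x)) \<le> 1 + norm l0"
      proof -
        fix x
        have "\<bar>inner (a x) (w x)\<bar> \<le> norm (a x) * norm (w x)" by (rule Cauchy_Schwarz_ineq2)
        also have "\<dots> \<le> 1 * (1 + norm l0)" using ab[of x] wb[of x] by (intro mult_mono) auto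
        finally show "norm (inner (a x) (w x)) \<le> 1 + norm l0" by simp
      qed
    qed measurable
    have "(\<integral>x. inner (a x) (u x) \<partial>std_gaussian) = (\<integral>x. inner (a x) (w x) + inner (a x) l0 \<partial>std_gaussian)"
      unfolding w_def by (simp add: inner_diff_right)
    also have "\<dots> = (\<integral>x. inner (a x) (w x) \<partial>std_gaussian) + inner (\<integral>x. a x \<partial>std_gaussian) l0"
      using iw ia by simp
    finally show ?thesis using a0 by simp
  qed
  have "(\<integral>x. norm (w x) \<partial>std_gaussian) = (\<integral>x. inner (g x) (w x) \<partial>std_gaussian)"
    by (simp add: gw)
  also have "\<dots> = (\<integral>x. inner (g x) (u x) \<partial>std_gaussian)" using shift[OF gm gb g0] by simp
  also have "\<dots> \<le> (\<integral>x. inner (f x) (u x) \<partial>std_gaussian)" by (rule FV[OF ag])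
  also have "\<dots> = (\<integral>x. inner (f x) (w x) \<partial>std_gaussian)" by (rule shift[OF fm fa(2) fa(3)])
  finally have le: "(\<integral>x. norm (w x) \<partial>std_gaussian) \<le> (\<integral>x. inner (f x) (w x) \<partial>std_gaussian)" .
  define d where "d x = norm (w x) - inner (f x) (w x)" for x
  have dm[measurable]: "d \<in> borel_measurable borel" unfolding d_def by measurable
  have dnn: "0 \<le> d x" for x
  proof -
    have "inner (f x) (w x) \<le> norm (f x) * norm (w x)" by (rule norm_cauchy_schwarz)
    also have "\<dots> \<le> 1 * norm (w x)" using fa(2)[of x] by (intro mult_right_mono) auto
    finally show ?thesis unfolding d_def by simp
  qed
  have iw2: "integrable std_gaussian (\<lambda>x. norm (w x))" unfolding w_def by (rule intn)
  have iw3: "integrable std_gaussian (\<lambda>x. inner (f x) (w x))"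
  proof (rule bounded_integrable[where B="1 + norm l0"])
    show "\<And>x. norm (inner (f x) (w x)) \<le> 1 + norm l0"
    proof -
      fix x
      have "\<bar>inner (f x) (w x)\<bar> \<le> norm (f x) * norm (w x)" by (rule Cauchy_Schwarz_ineq2)
      also have "\<dots> \<le> 1 * (1 + norm l0)" using fa(2)[of x] nb[of x l0] unfolding w_def by (intro mult_mono) auto
      finally show "norm (inner (f x) (w x)) \<le> 1 + norm l0" by simp
    qed
  qed measurable
  have id: "integrable std_gaussian d" unfolding d_def using iw2 iw3 by simp
  have "(\<integral>x. d x \<partial>std_gaussian) = (\<integral>x. norm (w x) \<partial>std_gaussian) - (\<integral>x. inner (f x) (w x) \<partial>std_gaussian)"
    unfolding d_def using iw2 iw3 by simp
  then have "(\<integral>x. d x \<partial>std_gaussian) \<le> 0" using le by simp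
  moreover have "0 \<le> (\<integral>x. d x \<partial>std_gaussian)" by (rule integral_nonneg_AE) (simp add: dnn)
  ultimately have "(\<integral>x. d x \<partial>std_gaussian) = 0" by simp
  then have "AE x in std_gaussian. d x = 0"
    using integral_nonneg_eq_0_iff_AE[OF id] dnn by simp
  then have "AE x in std_gaussian. norm (u x - l0) *\<^sub>R f x = u x - l0"
  proof (rule AE_mp, intro AE_I2 impI)
    fix x assume "d x = 0"
    then have "inner (f x) (w x) = norm (w x)" unfolding d_def by simp
    from cs_eq[OF fa(2)[of x] this] show "norm (u x - l0) *\<^sub>R f x = u x - l0" unfolding w_def .
  qed
  then show ?thesis by blast
qed

theorem lemma5p9:
  fixes \<rho> :: real and f :: "real^'n \<Rightarrow> real^'k"
  assumes "0 < \<rho>" "\<rho> < 1"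
    and "optimally_stable \<rho> f"
  shows "\<exists>lam :: real^'k. AE x in lborel.
           norm (OU \<rho> f x - (1/2) *\<^sub>R lam) *\<^sub>R f x = OU \<rho> f x - (1/2) *\<^sub>R lam"
proof -
  have af: "admissible f" using assms(3) unfolding optimally_stable_def by simp
  note fa = admissible_bounds[OF af]
  have um: "OU \<rho> f \<in> borel_measurable borel" by (rule OU_meas[OF fa(1)])
  have ub: "norm (OU \<rho> f x) \<le> 1" for x by (rule OU_bound[OF fa(1) fa(2)])
  obtain l where l: "AE x in std_gaussian. norm (OU \<rho> f x - l) *\<^sub>R f x = OU \<rho> f x - l"
    using dual_step[OF af um ub first_variation[OF assms(1) assms(2) assms(3)]] by blast
  have "AE x in lborel. 0 < ennreal (gauss_density x) \<longrightarrow> norm (OU \<rho> f x - l) *\<^sub>R f x = OU \<rho> f x - l"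
    using l unfolding std_gaussian_def by (subst (asm) AE_density) auto
  then have "AE x in lborel. norm (OU \<rho> f x - (1/2) *\<^sub>R (2 *\<^sub>R l)) *\<^sub>R f x = OU \<rho> f x - (1/2) *\<^sub>R (2 *\<^sub>R l)"
    by (rule AE_mp) (auto intro!: AE_I2 simp: gauss_density_pos)
  then show ?thesis by blast
qed

end
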